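(* Let $N_A,N_B\ge1$ be integers, $\overline{\gamma}_B>0$, $\sigma\in(0,1)$ and $R_b\ge0$. Define $p_{suc}(\mu)=1-\operatorname{P}\!\left(N_B,\mu/\overline{\gamma}_B\right)^{N_A}$ and $\alpha=\Gamma(N_B+1)^{1/N_B}$. If $p_{suc}(2^{R_b}-1)\ge\sigma$, then $$R_b\le\log_2\!\left(1+\overline{\gamma}_B\,\alpha\,\log\!\left(\left(1-(1-\sigma)^{\frac{1}{N_A N_B}}\right)^{-1}\right)\right),$$ where $\log$ is the natural logarithm.
   Context: $\operatorname{P}(s,z)=\gamma(s,z)/\Gamma(s)$ denotes the regularized lower incomplete gamma function, $\gamma(s,z)=\int_0^z t^{s-1}e^{-t}\,dt$. $p_{suc}(\mu)$ is the probability that the post-selection, post-combining SNR of the legitimate link exceeds $\mu$, for transmit antenna selection over $N_A$ antennas and maximal ratio combining over $N_B$ antennas in Rayleigh fading with average per-branch SNR $\overline{\gamma}_B$. *)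

theory Defs
  imports "HOL-Analysis.Analysis"
begin

definition lower_inc_gamma :: "real \<Rightarrow> real \<Rightarrow> real" where
  "lower_inc_gamma s z = integral {0..z} (\<lambda>t. t powr (s - 1) * exp (- t))"

definition reg_lower_inc_gamma :: "real \<Rightarrow> real \<Rightarrow> real" where
  "reg_lower_inc_gamma s z = lower_inc_gamma s z / Gamma s"

text \<open>Success probability for TAS over NA antennas with MRC over NB antennas.\<close>
definition p_suc :: "nat \<Rightarrow> nat \<Rightarrow> real \<Rightarrow> real \<Rightarrow> real" where
  "p_suc NA NB gB \<mu> = 1 - (reg_lower_inc_gamma (real NB) (\<mu> / gB)) ^ NA"

end

theory Submission
  imports Defs "HOL-Real_Asymp.Real_Asymp"
begin

lemma F_deriv:
  "((\<lambda>x. exp (-x) * (\<Sum>k<Suc m. x^k / fact k)) has_real_derivative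
     (- exp (-x) * x^m / fact m)) (at x)"
proof (induction m)
  case 0
  show ?case by (auto intro!: derivative_eq_intros)
next
  case (Suc m)
  have eq: "(\<lambda>x. exp (-x) * (\<Sum>k<Suc (Suc m). x^k / fact k)) =
     (\<lambda>x. exp (-x) * (\<Sum>k<Suc m. x^k / fact k) + exp (-x) * (x^Suc m / fact (Suc m)))"
    by (simp add: fun_eq_iff distrib_left del: fact_Suc power_Suc)
  have d2: "((\<lambda>x. exp (-x) * (x^Suc m / fact (Suc m))) has_real_derivative
       (- exp (-x) * (x^Suc m / fact (Suc m)) + exp (-x) * (real (Suc m) * x^m / fact (Suc m)))) (at x)"
    apply (rule derivative_eq_intros refl)+
    apply simp
    apply (rule refl)
    by (simp add: field_simps del: fact_Suc of_nat_Suc power_Suc)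
  have "((\<lambda>x. exp (-x) * (\<Sum>k<Suc m. x^k / fact k) + exp (-x) * (x^Suc m / fact (Suc m)))
     has_real_derivative (- exp (-x) * x^m / fact m +
        (- exp (-x) * (x^Suc m / fact (Suc m)) + exp (-x) * (real (Suc m) * x^m / fact (Suc m))))) (at x)"
    by (rule DERIV_add[OF Suc d2])
  moreover have "- exp (-x) * x^m / fact m +
        (- exp (-x) * (x^Suc m / fact (Suc m)) + exp (-x) * (real (Suc m) * x^m / fact (Suc m)))
      = - exp (-x) * x^Suc m / fact (Suc m)"
  proof -
    have f: "fact (Suc m) = real (Suc m) * fact m" by simp
    have p: "fact m > (0::real)" by simp
    show ?thesis unfolding f using p
      by (simp add: field_simps del: fact_Suc of_nat_Suc)
  qed
  ultimately show ?case unfolding eq by simp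
qed
lemma reg_gamma_closed:
  assumes n: "n \<ge> 1" and x: "x \<ge> 0"
  shows "reg_lower_inc_gamma (real n) x = 1 - exp (-x) * (\<Sum>k<n. x^k / fact k)"
proof -
  obtain m where m: "n = Suc m" using n by (cases n) auto
  define G where "G = (\<lambda>t::real. - fact m * (exp (-t) * (\<Sum>k<Suc m. t^k / fact k)))"
  have d: "(G has_real_derivative (t^m * exp (-t))) (at t)" for t
  proof -
    have "(G has_real_derivative (- fact m * (- exp (-t) * t^m / fact m))) (at t)"
      unfolding G_def by (intro DERIV_cmult F_deriv)
    thus ?thesis by (simp add: mult.commute)
  qed
  have "((\<lambda>t. t^m * exp (-t)) has_integral (G x - G 0)) {0..x}"
    by (rule fundamental_theorem_of_calculus[OF x])
       (auto intro!: has_field_derivative_at_within d simp: has_real_derivative_iff_has_vector_derivative[symmetric])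
  moreover have "((\<lambda>t. t powr (real n - 1) * exp (-t)) has_integral (G x - G 0)) {0..x}
     \<longleftrightarrow> ((\<lambda>t. t^m * exp (-t)) has_integral (G x - G 0)) {0..x}"
  proof (rule has_integral_spike_finite_eq[of "{0}"])
    fix t assume "t \<in> {0..x} - {0}"
    hence "t > 0" by auto
    thus "t^m * exp (-t) = t powr (real n - 1) * exp (-t)"
      using m by (simp add: powr_realpow)
  qed auto
  ultimately have "((\<lambda>t. t powr (real n - 1) * exp (-t)) has_integral (G x - G 0)) {0..x}" by simp
  hence "lower_inc_gamma (real n) x = G x - G 0"
    unfolding lower_inc_gamma_def by (rule integral_unique)
  moreover have "G 0 = - fact m"
    unfolding G_def by (simp add: zero_power lessThan_Suc_eq_insert_0 sum.reindex del: lessThan_Suc)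
  moreover have "Gamma (real n) = fact m"
    using Gamma_fact[of m] m by (simp add: add.commute)
  ultimately have "lower_inc_gamma (real n) x / Gamma (real n) = G x / fact m + 1"
    by (simp add: field_simps)
  thus ?thesis
    unfolding reg_lower_inc_gamma_def G_def using m by simp
qed



lemma rho_stays_pos:
  fixes b z w :: real
  assumes b0: "0 \<le> b" and b1: "b \<le> 1" and z: "0 < z" and zw: "z \<le> w"
    and pos: "exp (b*z) - exp ((b-1)*z) - z > 0"
  shows "exp (b*w) - exp ((b-1)*w) - w > 0"
proof -
  define r where "r = (\<lambda>t::real. exp (b*t) - exp ((b-1)*t) - t)"
  define r1 where "r1 = (\<lambda>t::real. b * exp (b*t) - (b-1) * exp ((b-1)*t) - 1)"
  define r2 where "r2 = (\<lambda>t::real. b^2 * exp (b*t) - (b-1)^2 * exp ((b-1)*t))"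
  have dr: "DERIV r t :> r1 t" for t
    unfolding r_def r1_def by (auto intro!: derivative_eq_intros)
  have dr1: "DERIV r1 t :> r2 t" for t
    unfolding r1_def r2_def by (auto intro!: derivative_eq_intros simp: power2_eq_square)
  have r2mono: "r2 u \<le> r2 t" if "u \<le> t" for u t
  proof -
    have "b^2 * exp (b*u) \<le> b^2 * exp (b*t)"
      using that b0 by (intro mult_left_mono) (auto intro: mult_left_mono)
    moreover have "(b-1)^2 * exp ((b-1)*t) \<le> (b-1)^2 * exp ((b-1)*u)"
      using that b1 by (intro mult_left_mono) (auto intro: mult_left_mono_neg)
    ultimately show ?thesis unfolding r2_def by linarith
  qed
  have "r 0 = 0" "r1 0 = 0" unfolding r_def r1_def by auto
  obtain c where c: "0 < c" "c < z" "r z - r 0 = (z - 0) * r1 c"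
    using MVT2[of 0 z r r1] z dr by auto
  have r1c: "r1 c > 0"
  proof -
    have "r z > 0" using pos unfolding r_def by simp
    hence "z * r1 c > 0" using c \<open>r 0 = 0\<close> by simp
    thus ?thesis using z by (simp add: zero_less_mult_iff)
  qed
  obtain d where d: "0 < d" "d < c" "r1 c - r1 0 = (c - 0) * r2 d"
    using MVT2[of 0 c r1 r2] c dr1 by auto
  have r2d: "r2 d > 0"
  proof -
    have "c * r2 d > 0" using d r1c \<open>r1 0 = 0\<close> by simp
    thus ?thesis using c by (simp add: zero_less_mult_iff)
  qed
  have r1pos: "r1 t > 0" if "c \<le> t" for t
  proof -
    have "r1 c \<le> r1 t"
    proof (rule DERIV_nonneg_imp_nondecreasing[OF that])
      fix x assume "c \<le> x"
      hence "r2 d \<le> r2 x" using d(2) by (intro r2mono) simp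
      thus "\<exists>y. DERIV r1 x :> y \<and> 0 \<le> y" using dr1[of x] r2d by (intro exI[of _ "r2 x"]) simp
    qed
    thus ?thesis using r1c by linarith
  qed
  have "r z \<le> r w"
  proof (rule DERIV_nonneg_imp_nondecreasing[OF zw])
    fix x assume "z \<le> x"
    thus "\<exists>y. DERIV r x :> y \<and> 0 \<le> y" using dr[of x] r1pos[of x] c(2)
      by (intro exI[of _ "r1 x"]) simp
  qed
  thus ?thesis using pos unfolding r_def by simp
qed


lemma key:
  fixes n :: nat and y :: real
  assumes n: "n \<ge> 2" and y: "y \<ge> 0"
  shows "(1 - exp (-y))^n \<le> 1 - exp (-((fact n powr (1 / real n))*y)) *
            (\<Sum>k<n. ((fact n powr (1 / real n))*y)^k / fact k)"
proof -
  define a where "a = (fact n powr (1 / real n) :: real)"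
  obtain m where m: "n = Suc m" and m1: "m \<ge> 1" using n by (cases n) auto
  have fpos: "(fact n :: real) > 0" by simp
  have apos: "a > 0" unfolding a_def using fpos by simp
  have an: "a ^ n = fact n"
  proof -
    have "a ^ n = a powr real n" using apos by (simp add: powr_realpow)
    also have "\<dots> = fact n powr (1 / real n * real n)" unfolding a_def by (simp add: powr_powr)
    also have "\<dots> = fact n" using n by simp
    finally show ?thesis .
  qed
  have a1: "a \<ge> 1" unfolding a_def by (rule ge_one_powr_ge_zero) auto
  have an2: "a \<le> real n"
  proof -
    have "(fact n :: real) \<le> real n ^ n" by (metis fact_le_power of_nat_fact of_nat_le_iff of_nat_power)
    hence "a \<le> (real n ^ n) powr (1 / real n)" unfolding a_def by (intro powr_mono2) auto
    also have "\<dots> = real n" using n by (simp add: powr_realpow[symmetric] powr_powr)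
    finally show ?thesis .
  qed
  define b where "b = (a - 1) / real m"
  have b0: "b \<ge> 0" and b1: "b \<le> 1" using a1 an2 m m1 unfolding b_def by (auto simp: field_simps)
  have ab: "a = 1 + real m * b" using m1 unfolding b_def by simp
  define S where "S = (\<lambda>x::real. \<Sum>k<n. x^k / fact k)"
  define D where "D = (\<lambda>y. 1 - exp (-(a*y)) * S (a*y) - (1 - exp (-y))^n)"
  define D' where "D' = (\<lambda>y::real. real n * exp (-y) * ((y * exp (-(b*y)))^m - (1 - exp (-y))^m))"
  define r where "r = (\<lambda>t::real. exp (b*t) - exp ((b-1)*t) - t)"
  have dD: "DERIV D t :> D' t" for t
  proof -
    have d1: "DERIV (\<lambda>t. exp (-(a*t)) * S (a*t)) t :> (- exp (-(a*t)) * (a*t)^m / fact m) * a"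
    proof -
      have g: "DERIV (\<lambda>t. a*t) t :> a" by (auto intro!: derivative_eq_intros)
      show ?thesis
        using DERIV_chain[where g="\<lambda>t. a*t" and x=t, OF F_deriv[of m "a*t"] g] unfolding S_def m
        by (simp add: o_def)
    qed
    have d2: "DERIV (\<lambda>t. (1 - exp (-t))^n) t :> real n * (1 - exp (-t))^m * exp (-t)"
      by (rule derivative_eq_intros refl | simp add: m)+
    have "DERIV D t :> 0 - (- exp (-(a*t)) * (a*t)^m / fact m) * a - real n * (1 - exp (-t))^m * exp (-t)"
      unfolding D_def by (intro DERIV_diff d1 d2 DERIV_const)
    moreover have "0 - (- exp (-(a*t)) * (a*t)^m / fact m) * a - real n * (1 - exp (-t))^m * exp (-t) = D' t"
    proof -
      have "a^Suc m = real (Suc m) * fact m" using an m by simp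
      hence h: "a * a^m = real n * fact m" using m by simp
      have e1: "(- exp (-(a*t)) * (a*t)^m / fact m) * a = - real n * t^m * exp (-(a*t))"
      proof -
        have "(- exp (-(a*t)) * (a*t)^m / fact m) * a = - (a * a^m) * t^m * exp (-(a*t)) / fact m"
          by (simp add: power_mult_distrib algebra_simps)
        also have "\<dots> = - real n * t^m * exp (-(a*t))" unfolding h by simp
        finally show ?thesis .
      qed
      have "exp (-(a*t)) = exp (-t) * exp (-(b*t))^m"
        unfolding ab by (simp add: exp_of_nat_mult[symmetric] exp_add[symmetric] algebra_simps)
      thus ?thesis unfolding e1 D'_def by (simp add: power_mult_distrib algebra_simps)
    qed
    ultimately show ?thesis by simp
  qed
  have rexp: "r t = exp (b*t) * (1 - exp (-t)) - t" for t
    unfolding r_def by (simp add: algebra_simps exp_add[symmetric])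
  have A: "D' t \<ge> 0" if "t \<ge> 0" "r t \<le> 0" for t
  proof -
    have "exp (b*t) * (1 - exp (-t)) \<le> t" using that rexp[of t] by simp
    hence "1 - exp (-t) \<le> t * exp (-(b*t))" by (simp add: exp_minus field_simps)
    moreover have "0 \<le> 1 - exp (-t)" using that by simp
    ultimately have "(1 - exp (-t))^m \<le> (t * exp (-(b*t)))^m" by (rule power_mono)
    thus ?thesis unfolding D'_def by simp
  qed
  have B: "D' t \<le> 0" if "t \<ge> 0" "r t \<ge> 0" for t
  proof -
    have "exp (b*t) * (1 - exp (-t)) \<ge> t" using that rexp[of t] by simp
    hence "1 - exp (-t) \<ge> t * exp (-(b*t))" by (simp add: exp_minus field_simps)
    moreover have "0 \<le> t * exp (-(b*t))" using that by simp
    ultimately have "(1 - exp (-t))^m \<ge> (t * exp (-(b*t)))^m" by (rule power_mono)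
    thus ?thesis unfolding D'_def by (simp add: mult_nonpos_nonneg mult_le_0_iff)
  qed
  have D0: "D 0 = 0" unfolding D_def S_def using n by (simp add: zero_power lessThan_Suc_eq_insert_0 sum.reindex m del: lessThan_Suc)
  have r0: "r 0 = 0" unfolding r_def by simp
  have lim: "(D \<longlongrightarrow> 0) at_top"
  proof -
    have e: "((\<lambda>x::real. exp (-x) * S x) \<longlongrightarrow> 0) at_top"
    proof -
      have "((\<lambda>x::real. \<Sum>k<n. (x^k / exp x) / fact k) \<longlongrightarrow> (\<Sum>k<n. 0 / fact k)) at_top"
        by (intro tendsto_intros tendsto_power_div_exp_0) simp
      thus ?thesis unfolding S_def by (simp add: sum_distrib_left exp_minus field_simps)
    qed
    have al: "filterlim (\<lambda>y. a*y) at_top at_top"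
      using filterlim_tendsto_pos_mult_at_top[OF tendsto_const apos filterlim_ident] .
    have e2: "((\<lambda>y. exp (-(a*y)) * S (a*y)) \<longlongrightarrow> 0) at_top"
      using filterlim_compose[OF e al] by simp
    have e3: "((\<lambda>y::real. exp (-y)) \<longlongrightarrow> 0) at_top" by real_asymp
    have "(D \<longlongrightarrow> 1 - 0 - (1 - 0)^n) at_top"
      unfolding D_def by (intro tendsto_intros e2 e3)
    thus ?thesis by simp
  qed
  show ?thesis
  proof (cases "\<forall>t\<in>{0..y}. r t \<le> 0")
    case True
    have "D 0 \<le> D y"
    proof (rule DERIV_nonneg_imp_nondecreasing[OF y])
      fix x assume "0 \<le> x" "x \<le> y"
      thus "\<exists>z. DERIV D x :> z \<and> 0 \<le> z" using dD[of x] A[of x] True by auto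
    qed
    thus ?thesis using D0 unfolding D_def S_def a_def by simp
  next
    case False
    then obtain z where z: "0 \<le> z" "z \<le> y" "r z > 0" by (auto simp: not_le)
    have zpos: "z > 0" using z r0 by (cases "z = 0") auto
    have rpos: "r w > 0" if "z \<le> w" for w
      using rho_stays_pos[OF b0 b1 zpos that] z(3) unfolding r_def by simp
    have "\<forall>\<^sub>F Y in at_top. D Y \<le> D y"
      using eventually_ge_at_top[of y]
    proof eventually_elim
      case (elim Y)
      show ?case
      proof (rule DERIV_nonpos_imp_nonincreasing[OF elim])
        fix x assume "y \<le> x" "x \<le> Y"
        thus "\<exists>d. DERIV D x :> d \<and> d \<le> 0" using dD[of x] B[of x] rpos[of x] z y by auto
      qed
    qed
    hence "0 \<le> D y" using tendsto_upperbound[OF lim] by simp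
    thus ?thesis unfolding D_def S_def a_def by simp
  qed
qed


lemma key2:
  fixes n :: nat and x :: real
  assumes n: "n \<ge> 1" and x: "x \<ge> 0"
  shows "(1 - exp (-(x / (fact n powr (1 / real n)))))^n \<le> reg_lower_inc_gamma (real n) x"
proof (cases "n = 1")
  case True
  thus ?thesis using reg_gamma_closed[OF n x] by simp
next
  case False
  hence n2: "n \<ge> 2" using n by simp
  define a where "a = (fact n powr (1 / real n) :: real)"
  have apos: "a > 0" unfolding a_def by simp
  have "x / a \<ge> 0" using x apos by simp
  from key[OF n2 this] have "(1 - exp (-(x/a)))^n \<le> 1 - exp (-x) * (\<Sum>k<n. x^k / fact k)"
    using apos unfolding a_def[symmetric] by simp
  thus ?thesis using reg_gamma_closed[OF n x] unfolding a_def by simp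
qed

theorem proposition1:
  fixes NA NB :: nat and gB \<sigma> Rb :: real
  assumes "NA \<ge> 1" and "NB \<ge> 1" and "gB > 0"
    and "0 < \<sigma>" and "\<sigma> < 1" and "Rb \<ge> 0"
    and "p_suc NA NB gB (2 powr Rb - 1) \<ge> \<sigma>"
  shows "Rb \<le> log 2 (1 + gB * (Gamma (real NB + 1) powr (1 / real NB))
            * ln (inverse (1 - (1 - \<sigma>) powr (1 / (real NA * real NB)))))"
proof -
  note NA = assms(1) and NB = assms(2) and gB = assms(3) and s0 = assms(4) and s1 = assms(5)
    and Rb = assms(6) and hyp = assms(7)
  define a where "a = (fact NB powr (1 / real NB) :: real)"
  have aG: "Gamma (real NB + 1) powr (1 / real NB) = a"
    unfolding a_def using Gamma_fact[of NB, where 'a=real] by (simp add: add.commute)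
  have apos: "a > 0" unfolding a_def by simp
  define \<mu> where "\<mu> = 2 powr Rb - 1"
  have p1: "2 powr Rb \<ge> (1::real)" using Rb by (intro ge_one_powr_ge_zero) auto
  hence mu0: "\<mu> \<ge> 0" unfolding \<mu>_def by simp
  define x where "x = \<mu> / gB"
  have x0: "x \<ge> 0" unfolding x_def using mu0 gB by simp
  define y where "y = x / a"
  define v where "v = 1 - exp (-y)"
  define P where "P = reg_lower_inc_gamma (real NB) x"
  have v0: "v \<ge> 0" unfolding v_def y_def using x0 apos by simp
  have vP: "v ^ NB \<le> P" unfolding v_def y_def P_def a_def using key2[OF NB x0] .
  have "P ^ NA \<le> 1 - \<sigma>" using hyp unfolding p_suc_def P_def x_def \<mu>_def by simp
  moreover have "(v ^ NB) ^ NA \<le> P ^ NA" using vP v0 by (intro power_mono) auto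
  ultimately have vN: "v ^ (NA * NB) \<le> 1 - \<sigma>" by (simp add: power_mult[symmetric] mult.commute)
  define N where "N = NA * NB"
  have Npos: "N > 0" unfolding N_def using NA NB by simp
  define c where "c = (1 - \<sigma>) powr (1 / (real NA * real NB))"
  have c0: "c \<ge> 0" unfolding c_def by simp
  have cN: "c ^ N = 1 - \<sigma>"
  proof -
    have "c ^ N = c powr real N" using c0 Npos s1 unfolding c_def by (simp add: powr_realpow)
    also have "\<dots> = (1 - \<sigma>) powr (1 / (real NA * real NB) * real N)" unfolding c_def by (simp add: powr_powr)
    also have "\<dots> = 1 - \<sigma>" using Npos s1 unfolding N_def by simp
    finally show ?thesis .
  qed
  have vc: "v \<le> c"
  proof (rule ccontr)
    assume "\<not> v \<le> c"
    hence "c ^ N < v ^ N" using c0 Npos by (intro power_strict_mono) auto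
    thus False using vN cN unfolding N_def by simp
  qed
  have c1: "c < 1"
  proof (rule ccontr)
    assume "\<not> c < 1"
    hence "1 \<le> c ^ N" by (intro one_le_power) simp
    thus False using cN s0 by simp
  qed
  have "exp (-y) \<ge> 1 - c" using vc unfolding v_def by simp
  hence "ln (1 - c) \<le> ln (exp (-y))" using c1 by (subst ln_le_cancel_iff) auto
  hence yL: "y \<le> ln (inverse (1 - c))" using c1 by (simp add: ln_inverse)
  have "x \<le> a * ln (inverse (1 - c))" using yL apos unfolding y_def by (simp add: field_simps)
  hence "\<mu> \<le> gB * a * ln (inverse (1 - c))" using gB unfolding x_def by (simp add: field_simps)
  hence le: "2 powr Rb \<le> 1 + gB * a * ln (inverse (1 - c))" unfolding \<mu>_def by simp
  have "Rb = log 2 (2 powr Rb)" by simp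
  also have "\<dots> \<le> log 2 (1 + gB * a * ln (inverse (1 - c)))"
    using le p1 by (subst log_le_cancel_iff) auto
  finally show ?thesis unfolding aG c_def .
qed

end
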